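(* Let $k$ be a field, $n\ge0$, and suppose $|k|\ge n+1$. Let $W=\operatorname{span}_k\{(\alpha_1x_1+\cdots+\alpha_mx_m)^n\mid \alpha_1,\ldots,\alpha_m\in k\}\subseteq k\langle x_1,\ldots,x_m\rangle$. Then $W=P_n(x_1,\ldots,x_m)$.
   Context: $k\langle x_1,\ldots,x_m\rangle$ is the free associative unital $k$-algebra. For nonnegative integers $i_1,\ldots,i_m$, $p_{i_1,\ldots,i_m}(x_1,\ldots,x_m)$ is the sum of all distinct noncommutative monomials with exactly $i_j$ occurrences of $x_j$ for each $j$ ($p_{0,\ldots,0}=1$), and $P_n(x_1,\ldots,x_m)=\operatorname{span}_k\{p_{i_1,\ldots,i_m}(x_1,\ldots,x_m)\mid i_1+\cdots+i_m=n\}$. *)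

theory Defs
  imports Main
begin

text \<open>Elements of the free associative unital algebra k<x_0,...,x_{m-1}> are represented
  by their coefficient functions on words (lists of variable indices).\<close>

type_synonym 'k ncpoly = "nat list \<Rightarrow> 'k"

definition nc_one :: "'k::field ncpoly" where
  "nc_one = (\<lambda>w. if w = [] then 1 else 0)"

definition nc_mult :: "'k::field ncpoly \<Rightarrow> 'k ncpoly \<Rightarrow> 'k ncpoly" where
  "nc_mult f g = (\<lambda>w. \<Sum>i\<le>length w. f (take i w) * g (drop i w))"

primrec nc_pow :: "'k::field ncpoly \<Rightarrow> nat \<Rightarrow> 'k ncpoly" where
  "nc_pow f 0 = nc_one"
| "nc_pow f (Suc n) = nc_mult f (nc_pow f n)"

definition nc_linear :: "nat \<Rightarrow> (nat \<Rightarrow> 'k::field) \<Rightarrow> 'k ncpoly" where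
  "nc_linear m \<alpha> = (\<lambda>w. if length w = 1 \<and> hd w < m then \<alpha> (hd w) else 0)"

definition nc_p :: "nat \<Rightarrow> (nat \<Rightarrow> nat) \<Rightarrow> 'k::field ncpoly" where
  "nc_p m e = (\<lambda>w. if set w \<subseteq> {..<m} \<and> (\<forall>j<m. count_list w j = e j) then 1 else 0)"

definition nc_span :: "'k::field ncpoly set \<Rightarrow> 'k ncpoly set" where
  "nc_span S = {f. \<exists>F c. finite F \<and> F \<subseteq> S \<and> f = (\<lambda>w. \<Sum>g\<in>F. c g * g w)}"

definition nc_P :: "nat \<Rightarrow> nat \<Rightarrow> 'k::field ncpoly set" where
  "nc_P m n = nc_span {nc_p m e | e. (\<Sum>j<m. e j) = n}"

end

theory Submission
  imports Defs "HOL-Computational_Algebra.Polynomial" "HOL-Library.FuncSet"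
begin

lemma ncspan_zero: "(\<lambda>w. 0) \<in> nc_span S"
  unfolding nc_span_def by (rule CollectI, rule exI[of _ "{}"]) auto

lemma ncspan_base: "g \<in> S \<Longrightarrow> g \<in> nc_span S"
  unfolding nc_span_def by (rule CollectI, rule exI[of _ "{g}"], rule exI[of _ "\<lambda>_. 1"]) auto

lemma sum_restrict_aux:
  fixes a :: "_ \<Rightarrow> 'b::semiring_0"
  assumes "finite A" "F \<subseteq> A"
  shows "(\<Sum>g\<in>A. (if g \<in> F then a g else 0) * h g) = (\<Sum>g\<in>F. a g * h g)"
proof -
  have "(\<Sum>g\<in>A. (if g \<in> F then a g else 0) * h g) = (\<Sum>g\<in>A. if g \<in> F then a g * h g else 0)"
    by (intro sum.cong) auto
  also have "\<dots> = (\<Sum>g\<in>A \<inter> F. a g * h g)" using assms by (simp add: sum.inter_restrict)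
  also have "A \<inter> F = F" using assms by auto
  finally show ?thesis .
qed

lemma ncspan_add_scale:
  assumes "f \<in> nc_span S" "f' \<in> nc_span S"
  shows "(\<lambda>w. f w + x * f' w) \<in> nc_span S"
proof -
  obtain F a where F: "finite F" "F \<subseteq> S" "f = (\<lambda>w. \<Sum>g\<in>F. a g * g w)"
    using assms(1) unfolding nc_span_def by blast
  obtain F' b where F': "finite F'" "F' \<subseteq> S" "f' = (\<lambda>w. \<Sum>g\<in>F'. b g * g w)"
    using assms(2) unfolding nc_span_def by blast
  define d where "d g = (if g \<in> F then a g else 0) + x * (if g \<in> F' then b g else 0)" for g
  have "(\<lambda>w. f w + x * f' w) = (\<lambda>w. \<Sum>g\<in>F \<union> F'. d g * g w)"
  proof
    fix w
    have "(\<Sum>g\<in>F \<union> F'. d g * g w) = (\<Sum>g\<in>F \<union> F'. (if g \<in> F then a g else 0) * g w)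
         + x * (\<Sum>g\<in>F \<union> F'. (if g \<in> F' then b g else 0) * g w)"
      by (simp add: d_def algebra_simps sum.distrib sum_distrib_left)
    also have "\<dots> = f w + x * f' w"
      using F F' by (simp add: sum_restrict_aux)
    finally show "f w + x * f' w = (\<Sum>g\<in>F \<union> F'. d g * g w)" by simp
  qed
  then show ?thesis unfolding nc_span_def using F F' by blast
qed

lemma ncspan_sum:
  assumes "finite I" "\<And>i. i \<in> I \<Longrightarrow> g i \<in> nc_span S"
  shows "(\<lambda>w. \<Sum>i\<in>I. c i * g i w) \<in> nc_span S"
  using assms
proof (induction I rule: finite_induct)
  case empty
  then show ?case using ncspan_zero by simp
next
  case (insert i I)
  have "(\<lambda>w. (\<Sum>i\<in>I. c i * g i w) + c i * g i w) \<in> nc_span S"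
    using insert by (intro ncspan_add_scale) auto
  then show ?case using insert by (simp add: add.commute)
qed

lemma pow_formula:
  "nc_pow (nc_linear m \<alpha>) n = (\<lambda>w. if length w = n \<and> set w \<subseteq> {..<m} then prod_list (map \<alpha> w) else 0)"
proof (induction n)
  case 0
  then show ?case by (auto simp: nc_one_def)
next
  case (Suc n)
  show ?case
  proof
    fix w :: "nat list"
    show "nc_pow (nc_linear m \<alpha>) (Suc n) w = (if length w = Suc n \<and> set w \<subseteq> {..<m} then prod_list (map \<alpha> w) else 0)"
    proof (cases w)
      case Nil
      then show ?thesis by (simp add: nc_mult_def nc_linear_def)
    next
      case (Cons a v)
      have "nc_pow (nc_linear m \<alpha>) (Suc n) w = (\<Sum>i\<le>length w. nc_linear m \<alpha> (take i w) * nc_pow (nc_linear m \<alpha>) n (drop i w))"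
        by (simp add: nc_mult_def)
      also have "\<dots> = (\<Sum>i\<in>{1}. nc_linear m \<alpha> (take i w) * nc_pow (nc_linear m \<alpha>) n (drop i w))"
      proof (rule sum.mono_neutral_right)
        show "\<forall>i\<in>{..length w} - {1}. nc_linear m \<alpha> (take i w) * nc_pow (nc_linear m \<alpha>) n (drop i w) = 0"
          using Cons by (auto simp: nc_linear_def min_def)
      qed (use Cons in auto)
      also have "\<dots> = (if a < m then \<alpha> a else 0) * nc_pow (nc_linear m \<alpha>) n v"
        using Cons by (simp add: nc_linear_def)
      finally show ?thesis using Cons Suc.IH by auto
    qed
  qed
qed

lemma length_count:
  "set (w::nat list) \<subseteq> {..<m} \<Longrightarrow> length w = (\<Sum>j<m. count_list w j)"
proof (induction w)
  case Nil then show ?case by simp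
next
  case (Cons a w)
  have "(\<Sum>j<m. count_list (a # w) j) = (\<Sum>j<m. (if j = a then 1 else 0) + count_list w j)"
    by (intro sum.cong) auto
  also have "\<dots> = (\<Sum>j<m. if j = a then 1 else 0) + (\<Sum>j<m. count_list w j)" by (simp add: sum.distrib)
  also have "(\<Sum>j<m. if j = a then 1 else 0) = (1::nat)" using Cons.prems by (subst sum.delta) auto
  finally show ?case using Cons by simp
qed

lemma prod_count:
  "set (w::nat list) \<subseteq> {..<m} \<Longrightarrow> prod_list (map \<alpha> w) = (\<Prod>j<m. \<alpha> j ^ count_list w j)"
proof (induction w)
  case Nil then show ?case by simp
next
  case (Cons a w)
  have "(\<Prod>j<m. \<alpha> j ^ count_list (a # w) j) = (\<Prod>j<m. (if j = a then \<alpha> a else 1) * \<alpha> j ^ count_list w j)"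
    by (intro prod.cong) auto
  also have "\<dots> = (\<Prod>j<m. if j = a then \<alpha> a else 1) * (\<Prod>j<m. \<alpha> j ^ count_list w j)" by (simp add: prod.distrib)
  also have "(\<Prod>j<m. if j = a then \<alpha> a else 1) = \<alpha> a" using Cons.prems by (subst prod.delta) auto
  finally show ?case using Cons by simp
qed


lemma exists_points:
  assumes "infinite (UNIV :: 'k set) \<or> n + 1 \<le> card (UNIV :: 'k set)"
  shows "\<exists>t :: nat \<Rightarrow> 'k. inj_on t {..n}"
proof -
  obtain B :: "'k set" where B: "finite B" "card B = n+1"
    using assms infinite_arbitrarily_large obtain_subset_with_card_n by metis
  then obtain h where "bij_betw h {0..<n+1} B" using ex_bij_betw_nat_finite by metis
  then have "inj_on h {..n}" unfolding bij_betw_def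
    by (metis atLeast0LessThan lessThan_Suc_atMost Suc_eq_plus1)
  then show ?thesis by blast
qed

lemma lagrange_coeffs:
  fixes t :: "nat \<Rightarrow> 'k::field"
  assumes inj: "inj_on t {..n}" and d: "d \<le> n"
  shows "\<exists>c. \<forall>q\<le>n. (\<Sum>i\<le>n. c i * t i ^ q) = (if q = d then 1 else 0)"
proof -
  define L where "L i = smult (inverse (\<Prod>j\<in>{..n}-{i}. (t i - t j))) (\<Prod>j\<in>{..n}-{i}. [:- t j, 1:])" for i
  have polyL: "poly (L i) (t k) = (if i = k then 1 else 0)" if "i \<le> n" "k \<le> n" for i k
  proof (cases "i = k")
    case True
    have "(\<Prod>j\<in>{..n}-{i}. (t i - t j)) \<noteq> 0"
      using inj that by (auto simp: inj_on_def)
    then show ?thesis using True by (simp add: L_def poly_prod)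
  next
    case False
    have "(\<Prod>j\<in>{..n}-{i}. poly [:- t j, 1:] (t k)) = 0"
      using that False by (intro prod_zero) (auto intro!: bexI[of _ k])
    then show ?thesis using False by (simp add: L_def poly_prod)
  qed
  have degL: "degree (L i) \<le> n" if "i \<le> n" for i
  proof -
    have "degree (\<Prod>j\<in>{..n}-{i}. [:- t j, 1:]) \<le> (\<Sum>j\<in>{..n}-{i}. degree [:- t j, 1:])"
      by (rule degree_prod_sum_le[unfolded o_def]) auto
    also have "\<dots> = card ({..n}-{i})" by simp
    also have "\<dots> = n" using that by simp
    finally show ?thesis by (simp add: L_def)
  qed
  show ?thesis
  proof (intro exI allI impI)
    fix q assume q: "q \<le> n"
    define Q where "Q = (\<Sum>i\<le>n. smult (t i ^ q) (L i)) - monom 1 q"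
    have roots0: "poly Q (t k) = 0" if k: "k \<le> n" for k
    proof -
      have "(\<Sum>i\<le>n. t i ^ q * poly (L i) (t k)) = (\<Sum>i\<le>n. if i = k then t k ^ q else 0)"
        using k polyL by (intro sum.cong) auto
      also have "\<dots> = t k ^ q" using k by simp
      finally have "(\<Sum>i\<le>n. t i ^ q * poly (L i) (t k)) = t k ^ q" .
      then show "poly Q (t k) = 0" by (simp add: Q_def poly_sum poly_monom)
    qed
    have roots: "t ` {..n} \<subseteq> {x. poly Q x = 0}" using roots0 by auto
    have degQ: "degree Q \<le> n"
      unfolding Q_def
      by (intro degree_diff_le degree_sum_le) (auto simp: q degL intro: order.trans[OF degree_smult_le] order.trans[OF degree_monom_le])
    have "Q = 0"
    proof (rule ccontr)
      assume "Q \<noteq> 0"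
      then have "card {x. poly Q x = 0} \<le> n" using card_poly_roots_bound degQ le_trans by blast
      moreover have "card (t ` {..n}) \<le> card {x. poly Q x = 0}"
        using roots poly_roots_finite[OF \<open>Q \<noteq> 0\<close>] card_mono by blast
      moreover have "card (t ` {..n}) = n + 1" using card_image[OF inj] by simp
      ultimately show False by simp
    qed
    then have "coeff Q d = 0" by simp
    then show "(\<Sum>i\<le>n. coeff (L i) d * t i ^ q) = (if q = d then 1 else 0)"
      by (simp add: Q_def coeff_sum coeff_monom mult.commute)
  qed
qed

lemma ncspan_span:
  assumes "f \<in> nc_span A" "A \<subseteq> nc_span B"
  shows "f \<in> nc_span B"
proof -
  obtain F c where F: "finite F" "F \<subseteq> A" "f = (\<lambda>w. \<Sum>g\<in>F. c g * g w)"
    using assms(1) unfolding nc_span_def by blast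
  have "(\<lambda>w. \<Sum>g\<in>F. c g * g w) \<in> nc_span B"
    using ncspan_sum[where I=F and g="\<lambda>g. g" and S=B and c=c] F assms(2) by auto
  then show ?thesis using F by simp
qed

lemma p_zero:
  assumes "(\<Sum>j<m. e j) = n" "\<not> (length w = n \<and> set w \<subseteq> {..<m})"
  shows "nc_p m e w = 0"
proof -
  have "\<not> (set w \<subseteq> {..<m} \<and> (\<forall>j<m. count_list w j = e j))"
  proof
    assume h: "set w \<subseteq> {..<m} \<and> (\<forall>j<m. count_list w j = e j)"
    then have "length w = (\<Sum>j<m. count_list w j)" using length_count by blast
    also have "\<dots> = n" using h assms(1) by simp
    finally show False using h assms(2) by simp
  qed
  then show ?thesis by (simp add: nc_p_def)
qed

lemma gen_in_P:
  "nc_pow (nc_linear m \<alpha>) n \<in> (nc_P m n :: 'k::field ncpoly set)"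
proof -
  define E where "E = {e \<in> PiE {..<m} (\<lambda>_. {..n}). (\<Sum>j<m. e j) = n}"
  have "finite (PiE {..<m} (\<lambda>_. {..n}))" by (intro finite_PiE) auto
  then have finE: "finite E" unfolding E_def by simp
  have "nc_pow (nc_linear m \<alpha>) n = (\<lambda>w. \<Sum>e\<in>E. (\<Prod>j<m. \<alpha> j ^ e j) * nc_p m e w)"
  proof
    fix w :: "nat list"
    show "nc_pow (nc_linear m \<alpha>) n w = (\<Sum>e\<in>E. (\<Prod>j<m. \<alpha> j ^ e j) * nc_p m e w)"
    proof (cases "length w = n \<and> set w \<subseteq> {..<m}")
      case True
      define e0 where "e0 = restrict (count_list w) {..<m}"
      have cle: "count_list w j \<le> n" for j
        using True count_le_length[of w j] by simp
      have "e0 \<in> PiE {..<m} (\<lambda>_. {..n})" unfolding e0_def using cle by auto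
      moreover have "(\<Sum>j<m. e0 j) = (\<Sum>j<m. count_list w j)" unfolding e0_def by (intro sum.cong) auto
      moreover have "(\<Sum>j<m. count_list w j) = n" using True length_count[of w m] by simp
      ultimately have e0E: "e0 \<in> E" unfolding E_def by simp
      have pe: "nc_p m e w = (if e = e0 then 1 else 0)" if "e \<in> E" for e
      proof -
        have "(\<forall>j<m. count_list w j = e j) \<longleftrightarrow> e = e0"
          using that unfolding E_def e0_def
          by (auto simp: PiE_def extensional_def fun_eq_iff)
        then show ?thesis using True by (simp add: nc_p_def)
      qed
      have "(\<Sum>e\<in>E. (\<Prod>j<m. \<alpha> j ^ e j) * nc_p m e w) = (\<Sum>e\<in>E. if e = e0 then (\<Prod>j<m. \<alpha> j ^ e j) else 0)"
        by (intro sum.cong) (simp_all add: pe)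
      also have "\<dots> = (\<Prod>j<m. \<alpha> j ^ e0 j)" using finE e0E by (simp add: sum.delta)
      also have "\<dots> = (\<Prod>j<m. \<alpha> j ^ count_list w j)" by (simp add: e0_def)
      finally show ?thesis using True by (simp add: pow_formula prod_count)
    next
      case False
      have z: "nc_p m e w = 0" if "e \<in> E" for e
        using that p_zero[OF _ False] unfolding E_def by blast
      have "(\<Sum>e\<in>E. (\<Prod>j<m. \<alpha> j ^ e j) * nc_p m e w) = 0" by (intro sum.neutral ballI) (simp add: z)
      then show ?thesis using False by (auto simp add: pow_formula)
    qed
  qed
  moreover have "(\<lambda>w. \<Sum>e\<in>E. (\<Prod>j<m. \<alpha> j ^ e j) * nc_p m e w) \<in> nc_P m n"
    unfolding nc_P_def using finE
    by (intro ncspan_sum[where g="\<lambda>e. nc_p m e"] ncspan_base) (auto simp: E_def)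
  ultimately show ?thesis by simp
qed

lemma p_in_span:
  fixes t :: "nat \<Rightarrow> 'k::field" and C :: "nat \<Rightarrow> nat \<Rightarrow> 'k"
  assumes C: "\<And>d q. d \<le> n \<Longrightarrow> q \<le> n \<Longrightarrow> (\<Sum>i\<le>n. C d i * t i ^ q) = (if q = d then 1 else 0)"
    and e: "(\<Sum>j<m. e j) = n"
  shows "nc_p m e \<in> nc_span {nc_pow (nc_linear m \<alpha>) n | \<alpha> :: nat \<Rightarrow> 'k. True}"
proof -
  define Is where "Is = PiE {..<m} (\<lambda>_. {..n})"
  have finI: "finite Is" unfolding Is_def by (rule finite_PiE) auto
  have ele: "e j \<le> n" if "j < m" for j
    using e that by (metis finite_lessThan lessThan_iff member_le_sum zero_le)
  define g where "g \<sigma> = nc_pow (nc_linear m (\<lambda>j. t (\<sigma> j))) n" for \<sigma> :: "nat \<Rightarrow> nat"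
  have "nc_p m e = (\<lambda>w. \<Sum>\<sigma>\<in>Is. (\<Prod>j<m. C (e j) (\<sigma> j)) * g \<sigma> w)"
  proof
    fix w :: "nat list"
    show "nc_p m e w = (\<Sum>\<sigma>\<in>Is. (\<Prod>j<m. C (e j) (\<sigma> j)) * g \<sigma> w)"
    proof (cases "length w = n \<and> set w \<subseteq> {..<m}")
      case True
      have cle: "count_list w j \<le> n" for j
        using True count_le_length[of w j] by simp
      have "(\<Sum>\<sigma>\<in>Is. (\<Prod>j<m. C (e j) (\<sigma> j)) * g \<sigma> w)
          = (\<Sum>\<sigma>\<in>Is. \<Prod>j<m. C (e j) (\<sigma> j) * t (\<sigma> j) ^ count_list w j)"
        using True by (intro sum.cong) (simp_all add: g_def pow_formula prod_count prod.distrib)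
      also have "\<dots> = (\<Prod>j<m. \<Sum>i\<le>n. C (e j) i * t i ^ count_list w j)"
        unfolding Is_def by (rule prod_sum_PiE[symmetric]) auto
      also have "\<dots> = (\<Prod>j<m. if count_list w j = e j then 1 else 0)"
        using C ele cle by (intro prod.cong) auto
      also have "\<dots> = nc_p m e w"
        using True by (auto simp: nc_p_def)
      finally show ?thesis by simp
    next
      case False
      have "g \<sigma> w = 0" for \<sigma> using False by (auto simp add: g_def pow_formula)
      then show ?thesis using p_zero[OF e False] by simp
    qed
  qed
  moreover have "(\<lambda>w. \<Sum>\<sigma>\<in>Is. (\<Prod>j<m. C (e j) (\<sigma> j)) * g \<sigma> w) \<in> nc_span {nc_pow (nc_linear m \<alpha>) n | \<alpha> :: nat \<Rightarrow> 'k. True}"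
    using finI by (intro ncspan_sum[where g=g] ncspan_base) (auto simp: g_def)
  ultimately show ?thesis by simp
qed

theorem proposition2p4:
  fixes m n :: nat
  assumes "infinite (UNIV :: 'k::field set) \<or> n + 1 \<le> card (UNIV :: 'k set)"
  shows "nc_span {nc_pow (nc_linear m \<alpha>) n | \<alpha> :: nat \<Rightarrow> 'k. True} = (nc_P m n :: 'k ncpoly set)"
proof
  show "nc_span {nc_pow (nc_linear m \<alpha>) n | \<alpha> :: nat \<Rightarrow> 'k. True} \<subseteq> nc_P m n"
  proof
    fix f assume "f \<in> nc_span {nc_pow (nc_linear m \<alpha>) n | \<alpha> :: nat \<Rightarrow> 'k. True}"
    then show "f \<in> nc_P m n" unfolding nc_P_def
      by (rule ncspan_span) (auto intro: gen_in_P[unfolded nc_P_def])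
  qed
next
  obtain t :: "nat \<Rightarrow> 'k" where t: "inj_on t {..n}" using exists_points[OF assms] by blast
  have "\<forall>d. \<exists>c. d \<le> n \<longrightarrow> (\<forall>q\<le>n. (\<Sum>i\<le>n. c i * t i ^ q) = (if q = d then 1 else 0))"
    using lagrange_coeffs[OF t] by blast
  then obtain C where C: "\<And>d q. d \<le> n \<Longrightarrow> q \<le> n \<Longrightarrow> (\<Sum>i\<le>n. C d i * t i ^ q) = (if q = d then 1 else 0)"
    by metis
  show "nc_P m n \<subseteq> nc_span {nc_pow (nc_linear m \<alpha>) n | \<alpha> :: nat \<Rightarrow> 'k. True}"
    unfolding nc_P_def
    by (rule subsetI, erule ncspan_span) (use p_in_span[OF C] in blast)
qed

end
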